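(* Let $\Gamma$ be a weak generalised hexagon of order $(s,t)$ and let $\mathcal{S}$ be a set of mutually opposite lines of $\Gamma$. Then $|\mathcal{S}|\le st^2+1$.
   Context: A weak generalised hexagon is a point-line geometry with no ordinary $k$-gons for $2\le k<6$ in which any two elements lie in a common ordinary hexagon; order $(s,t)$ means every line has $s+1$ points and every point is on $t+1$ lines. Distance is measured in the incidence graph; two lines are opposite if they are at distance $6$. *)

theory Defs
  imports Main
begin

definition inc_adj :: "'p set \<Rightarrow> 'l set \<Rightarrow> ('p \<Rightarrow> 'l \<Rightarrow> bool) \<Rightarrow> ('p + 'l) \<Rightarrow> ('p + 'l) \<Rightarrow> bool" where
  "inc_adj P L I u v = (case (u, v) of
      (Inl p, Inr l) \<Rightarrow> p \<in> P \<and> l \<in> L \<and> I p l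
    | (Inr l, Inl p) \<Rightarrow> p \<in> P \<and> l \<in> L \<and> I p l
    | _ \<Rightarrow> False)"

definition elements :: "'p set \<Rightarrow> 'l set \<Rightarrow> ('p + 'l) set" where
  "elements P L = Inl ` P \<union> Inr ` L"

definition is_walk :: "('v \<Rightarrow> 'v \<Rightarrow> bool) \<Rightarrow> 'v list \<Rightarrow> bool" where
  "is_walk adj xs = (xs \<noteq> [] \<and> (\<forall>i. Suc i < length xs \<longrightarrow> adj (xs ! i) (xs ! Suc i)))"

definition inc_dist :: "'p set \<Rightarrow> 'l set \<Rightarrow> ('p \<Rightarrow> 'l \<Rightarrow> bool) \<Rightarrow> ('p + 'l) \<Rightarrow> ('p + 'l) \<Rightarrow> nat" where
  "inc_dist P L I x y = (LEAST n. \<exists>xs. is_walk (inc_adj P L I) xs \<and> hd xs = x \<and> last xs = y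
                                      \<and> length xs = Suc n)"

definition ordinary_gon :: "'p set \<Rightarrow> 'l set \<Rightarrow> ('p \<Rightarrow> 'l \<Rightarrow> bool) \<Rightarrow> nat \<Rightarrow> ('p + 'l) list \<Rightarrow> bool" where
  "ordinary_gon P L I k xs = (length xs = 2 * k \<and> distinct xs \<and>
      (\<forall>i < 2 * k. inc_adj P L I (xs ! i) (xs ! ((i + 1) mod (2 * k)))))"

definition weak_gen_hexagon :: "'p set \<Rightarrow> 'l set \<Rightarrow> ('p \<Rightarrow> 'l \<Rightarrow> bool) \<Rightarrow> bool" where
  "weak_gen_hexagon P L I =
     ((\<forall>k xs. 2 \<le> k \<and> k < 6 \<longrightarrow> \<not> ordinary_gon P L I k xs) \<and>
      (\<forall>x \<in> elements P L. \<forall>y \<in> elements P L.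
          \<exists>xs. ordinary_gon P L I 6 xs \<and> x \<in> set xs \<and> y \<in> set xs))"

definition has_order :: "'p set \<Rightarrow> 'l set \<Rightarrow> ('p \<Rightarrow> 'l \<Rightarrow> bool) \<Rightarrow> nat \<Rightarrow> nat \<Rightarrow> bool" where
  "has_order P L I s t =
     ((\<forall>l \<in> L. card {p \<in> P. I p l} = s + 1) \<and> (\<forall>p \<in> P. card {l \<in> L. I p l} = t + 1))"

definition opposite_lines :: "'p set \<Rightarrow> 'l set \<Rightarrow> ('p \<Rightarrow> 'l \<Rightarrow> bool) \<Rightarrow> 'l \<Rightarrow> 'l \<Rightarrow> bool" where
  "opposite_lines P L I l m = (inc_dist P L I (Inr l) (Inr m) = 6)"

end

theory Submission imports Defs begin

lemma is_walk_single[simp]: "is_walk adj [a]"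
  by (simp add: is_walk_def)

lemma is_walk_Cons2[simp]: "is_walk adj (a # b # xs) = (adj a b \<and> is_walk adj (b # xs))"
  unfolding is_walk_def
  apply (auto simp: less_Suc_eq_0_disj)
  done

lemma inc_adj_simps[simp]:
  "inc_adj P L I (Inl p) (Inr l) = (p \<in> P \<and> l \<in> L \<and> I p l)"
  "inc_adj P L I (Inr l) (Inl p) = (p \<in> P \<and> l \<in> L \<and> I p l)"
  "inc_adj P L I (Inl p) (Inl q) = False"
  "inc_adj P L I (Inr l) (Inr m) = False"
  by (simp_all add: inc_adj_def)

lemma inc_adj_sym: "inc_adj P L I u v = inc_adj P L I v u"
  by (cases u; cases v) auto

lemma inc_adj_isl: "inc_adj P L I u v \<Longrightarrow> isl u \<noteq> isl v"
  by (cases u; cases v) auto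

lemma walk_parity:
  assumes "is_walk (inc_adj P L I) xs" "i < length xs"
  shows "isl (xs ! i) = (isl (xs ! 0) = even i)"
  using assms(2)
proof (induction i)
  case 0 then show ?case by simp
next
  case (Suc i)
  then have "inc_adj P L I (xs ! i) (xs ! Suc i)" using assms(1) unfolding is_walk_def by blast
  from inc_adj_isl[OF this] Suc show ?case by auto
qed

lemma dist_le:
  assumes "is_walk (inc_adj P L I) xs" "hd xs = x" "last xs = y" "length xs = Suc n"
  shows "inc_dist P L I x y \<le> n"
  unfolding inc_dist_def by (rule Least_le) (use assms in blast)

lemma is_walk_rev:
  assumes "is_walk (inc_adj P L I) xs" shows "is_walk (inc_adj P L I) (rev xs)"
  unfolding is_walk_def
proof (intro conjI allI impI)
  show "rev xs \<noteq> []" using assms by (simp add: is_walk_def)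
  fix i assume i: "Suc i < length (rev xs)"
  define j where "j = length xs - Suc (Suc i)"
  have j: "Suc j < length xs" using i j_def by auto
  have "inc_adj P L I (xs ! j) (xs ! Suc j)" using assms j unfolding is_walk_def by blast
  moreover have "rev xs ! i = xs ! Suc j" "rev xs ! Suc i = xs ! j"
    using i j_def by (auto simp: rev_nth Suc_diff_Suc)
  ultimately show "inc_adj P L I (rev xs ! i) (rev xs ! Suc i)" by (simp add: inc_adj_sym)
qed

lemma cycle_walk:
  assumes g: "ordinary_gon P L I 6 xs" and i: "i < 12"
  shows "is_walk (inc_adj P L I) (map (\<lambda>k. xs ! ((i + k) mod 12)) [0..<Suc d])"
  unfolding is_walk_def
proof (intro conjI allI impI)
  show "map (\<lambda>k. xs ! ((i + k) mod 12)) [0..<Suc d] \<noteq> []" by simp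
  fix k assume k: "Suc k < length (map (\<lambda>k. xs ! ((i + k) mod 12)) [0..<Suc d])"
  have a: "(i + k) mod 12 < 2 * 6" by simp
  have "inc_adj P L I (xs ! ((i + k) mod 12)) (xs ! (((i + k) mod 12 + 1) mod (2 * 6)))"
    using g a unfolding ordinary_gon_def by blast
  moreover have "((i + k) mod 12 + 1) mod (2 * 6) = (i + Suc k) mod 12" by (simp add: mod_Suc_eq)
  ultimately show "inc_adj P L I (map (\<lambda>k. xs ! ((i + k) mod 12)) [0..<Suc d] ! k)
          (map (\<lambda>k. xs ! ((i + k) mod 12)) [0..<Suc d] ! Suc k)"
    using k by (simp del: upt_Suc)
qed

lemma m1: "i < (12::nat) \<Longrightarrow> j < 12 \<Longrightarrow> (j + 12 - i) mod 12 = (if i \<le> j then j - i else j + 12 - i)"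
proof (cases "i \<le> j")
  case True
  assume "j < 12"
  then have e: "j + 12 - i = (j - i) + 12" and lt: "j - i < 12" using True by auto
  have "(j + 12 - i) mod 12 = ((j - i) + 12) mod 12" unfolding e ..
  also have "\<dots> = j - i" using lt by simp
  finally show ?thesis using True by simp
next
  case False
  assume "i < 12"
  then have "j + 12 - i < 12" using False by auto
  then show ?thesis using False by simp
qed

lemma hex_walk:
  assumes g: "ordinary_gon P L I 6 xs" and x: "x \<in> set xs" and y: "y \<in> set xs"
  shows "\<exists>w. is_walk (inc_adj P L I) w \<and> hd w = x \<and> last w = y \<and> length w \<le> 7"
proof -
  have len: "length xs = 12" using g unfolding ordinary_gon_def by simp
  have fw: "\<exists>w. is_walk (inc_adj P L I) w \<and> hd w = xs ! i \<and> last w = xs ! ((i + d) mod 12) \<and> length w = Suc d"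
    if "i < 12" for i d
  proof (intro exI conjI)
    show "is_walk (inc_adj P L I) (map (\<lambda>k. xs ! ((i + k) mod 12)) [0..<Suc d])"
      by (rule cycle_walk[OF g that])
    show "hd (map (\<lambda>k. xs ! ((i + k) mod 12)) [0..<Suc d]) = xs ! i"
      using that by (simp add: hd_map del: upt_Suc)
    show "last (map (\<lambda>k. xs ! ((i + k) mod 12)) [0..<Suc d]) = xs ! ((i + d) mod 12)"
      by (simp add: last_map del: upt_Suc)
    show "length (map (\<lambda>k. xs ! ((i + k) mod 12)) [0..<Suc d]) = Suc d" by simp
  qed
  obtain i where i: "i < 12" "x = xs ! i" using x len by (auto simp: in_set_conv_nth)
  obtain j where j: "j < 12" "y = xs ! j" using y len by (auto simp: in_set_conv_nth)
  define d where "d = (j + 12 - i) mod 12"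
  have dd: "d = (if i \<le> j then j - i else j + 12 - i)" using m1[OF i(1) j(1)] unfolding d_def .
  show ?thesis
  proof (cases "d \<le> 6")
    case True
    have "(i + d) mod 12 = j" using i(1) j(1) dd by (cases "i \<le> j") auto
    then obtain w where w: "is_walk (inc_adj P L I) w" "hd w = x" "last w = y" "length w = Suc d"
      using fw[OF i(1), of d] i j by auto
    show ?thesis using w True by auto
  next
    case False
    define e where "e = 12 - d"
    have "(j + e) mod 12 = i" using i(1) j(1) False dd unfolding e_def by (cases "i \<le> j") auto
    then obtain w where w: "is_walk (inc_adj P L I) w" "hd w = y" "last w = x" "length w = Suc e"
      using fw[OF j(1), of e] i j by auto
    have ne: "w \<noteq> []" using w by auto
    have "e \<le> 6" using False e_def by simp
    then show ?thesis using is_walk_rev[OF w(1)] w ne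
      by (intro exI[of _ "rev w"]) (auto simp: hd_rev last_rev)
  qed
qed

lemma opp_short:
  assumes "opposite_lines P L I l m" "l \<in> L" "m \<in> L" "x \<in> P" "I x l" "k \<in> L" "I x k"
    "y \<in> P" "I y k" "I y m"
  shows False
proof -
  have "inc_dist P L I (Inr l) (Inr m) \<le> 4"
    by (rule dist_le[of P L I "[Inr l, Inl x, Inr k, Inl y, Inr m]"]) (use assms in auto)
  then show False using assms(1) unfolding opposite_lines_def by simp
qed

lemma opp_path:
  assumes hex: "weak_gen_hexagon P L I" and opp: "opposite_lines P L I l m"
    and l: "l \<in> L" and m: "m \<in> L" and p: "p \<in> P" "I p l"
  shows "\<exists>l1 q l2 r. l1 \<in> L \<and> I p l1 \<and> l1 \<noteq> l \<and> q \<in> P \<and> I q l1 \<and> q \<noteq> p \<and>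
     l2 \<in> L \<and> I q l2 \<and> l2 \<noteq> l1 \<and> r \<in> P \<and> I r l2 \<and> I r m"
proof -
  have "Inl p \<in> elements P L" "Inr m \<in> elements P L" using p m by (auto simp: elements_def)
  then obtain xs where "ordinary_gon P L I 6 xs" "Inl p \<in> set xs" "Inr m \<in> set xs"
    using hex unfolding weak_gen_hexagon_def by blast
  from hex_walk[OF this] obtain w where w: "is_walk (inc_adj P L I) w" "hd w = Inl p"
    "last w = Inr m" "length w \<le> 7" by blast
  have wne: "w \<noteq> []" using w(1) by (simp add: is_walk_def)
  define k where "k = length w - 1"
  have lenk: "length w = Suc k" using wne k_def by simp
  have "isl (w ! k) = (isl (w ! 0) = even k)" using walk_parity[OF w(1), of k] lenk by simp
  moreover have "w ! k = Inr m" using w(3) wne lenk by (simp add: last_conv_nth)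
  moreover have "w ! 0 = Inl p" using w(2) wne by (simp add: hd_conv_nth)
  ultimately have oddk: "odd k" by simp
  obtain w' where w': "w = Inl p # w'" using w(2) wne by (cases w) auto
  have "is_walk (inc_adj P L I) (Inr l # w)" using w(1) w' l p by (cases w') auto
  then have "inc_dist P L I (Inr l) (Inr m) \<le> Suc k"
    by (rule dist_le) (use w lenk wne in auto)
  then have "6 \<le> Suc k" using opp unfolding opposite_lines_def by simp
  with oddk w(4) lenk have len6: "length w = 6" by presburger
  obtain a b c d e f where wl: "w = [a,b,c,d,e,f]"
    using len6 by (fastforce simp: length_Suc_conv numeral_eq_Suc)
  have ww: "is_walk (inc_adj P L I) [Inl p, b, c, d, e, Inr m]" using w wl by simp
  then obtain l1 q l2 r where pth: "l1 \<in> L" "I p l1" "q \<in> P" "I q l1" "l2 \<in> L" "I q l2"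
    "r \<in> P" "I r l2" "I r m"
    by (cases b; cases c; cases d; cases e) auto
  have "l1 \<noteq> l" using opp_short[OF opp l m pth(3) _ pth(5,6,7,8,9)] pth(4) by blast
  moreover have "q \<noteq> p" using opp_short[OF opp l m p pth(5) _ pth(7,8,9)] pth(6) by blast
  moreover have "l2 \<noteq> l1" using opp_short[OF opp l m p pth(1,2,7) _ pth(9)] pth(8) by blast
  ultimately show ?thesis using pth by blast
qed

lemma card_UN_bound:
  assumes "finite A" "\<And>a. a \<in> A \<Longrightarrow> finite (F a) \<and> card (F a) \<le> k"
  shows "finite (\<Union>a\<in>A. F a) \<and> card (\<Union>a\<in>A. F a) \<le> card A * k"
proof
  show "finite (\<Union>a\<in>A. F a)" using assms by blast
  have "card (\<Union>a\<in>A. F a) \<le> (\<Sum>a\<in>A. card (F a))" by (rule card_UN_le[OF assms(1)])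
  also have "\<dots> \<le> of_nat (card A) * k" by (rule sum_bounded_above) (use assms(2) in blast)
  also have "\<dots> = card A * k" by simp
  finally show "card (\<Union>a\<in>A. F a) \<le> card A * k" .
qed

theorem mainTheorem4:
  fixes P :: "'p set" and L :: "'l set" and I :: "'p \<Rightarrow> 'l \<Rightarrow> bool" and s t :: nat
    and S :: "'l set"
  assumes "weak_gen_hexagon P L I"
    and "has_order P L I s t"
    and "S \<subseteq> L"
    and "\<forall>l \<in> S. \<forall>m \<in> S. l \<noteq> m \<longrightarrow> opposite_lines P L I l m"
  shows "finite S \<and> card S \<le> s * t ^ 2 + 1"
proof (cases "S = {}")
  case True then show ?thesis by simp
next
  case False
  then obtain l where lS: "l \<in> S" by blast
  have lL: "l \<in> L" using lS assms(3) by blast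
  have ordL: "\<And>l. l \<in> L \<Longrightarrow> card {p \<in> P. I p l} = s + 1"
    and ordP: "\<And>p. p \<in> P \<Longrightarrow> card {l \<in> L. I p l} = t + 1"
    using assms(2) unfolding has_order_def by auto
  have finL: "finite {p \<in> P. I p l}" if "l \<in> L" for l using ordL[OF that] by (intro card_ge_0_finite) simp
  have finP: "finite {l \<in> L. I p l}" if "p \<in> P" for p using ordP[OF that] by (intro card_ge_0_finite) simp
  have "card {p \<in> P. I p l} \<noteq> 0" using ordL[OF lL] by simp
  then obtain p where "p \<in> {p \<in> P. I p l}" by (metis card.empty ex_in_conv)
  then have p: "p \<in> P" "I p l" by auto
  define A where "A = {l1 \<in> L. I p l1} - {l}"
  define B where "B = (\<lambda>l1. {q \<in> P. I q l1} - {p})"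
  define C where "C = (\<lambda>l1 q. {l2 \<in> L. I q l2} - {l1})"
  define T where "T = (\<Union>l1\<in>A. \<Union>q\<in>B l1. C l1 q)"
  have cA: "finite A \<and> card A = t" unfolding A_def using finP[OF p(1)] ordP[OF p(1)] p lL by simp
  have cB: "finite (B l1) \<and> card (B l1) \<le> s" if "l1 \<in> A" for l1
    using that finL ordL p unfolding A_def B_def by (auto simp: card_Diff_singleton_if)
  have cC: "finite (C l1 q) \<and> card (C l1 q) \<le> t" if "l1 \<in> A" "q \<in> B l1" for l1 q
    using that finP ordP unfolding A_def B_def C_def by (auto simp: card_Diff_singleton_if)
  have cT0: "finite T \<and> card T \<le> card A * (s * t)"
    unfolding T_def
  proof (rule card_UN_bound)
    show "finite A" using cA by blast
    fix l1 assume l1: "l1 \<in> A"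
    have "finite (\<Union>q\<in>B l1. C l1 q) \<and> card (\<Union>q\<in>B l1. C l1 q) \<le> card (B l1) * t"
      by (rule card_UN_bound) (use cB[OF l1] cC[OF l1] in auto)
    moreover have "card (B l1) * t \<le> s * t" using cB[OF l1] by simp
    ultimately show "finite (\<Union>q\<in>B l1. C l1 q) \<and> card (\<Union>q\<in>B l1. C l1 q) \<le> s * t" by linarith
  qed
  have cT: "finite T \<and> card T \<le> t * (s * t)" using cT0 cA by simp
  define f where "f = (\<lambda>m. SOME l2. l2 \<in> T \<and> (\<exists>r \<in> P. I r l2 \<and> I r m))"
  have fT: "f m \<in> T \<and> (\<exists>r \<in> P. I r (f m) \<and> I r m) \<and> f m \<in> L" if "m \<in> S - {l}" for m
  proof -
    have mL: "m \<in> L" using that assms(3) by blast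
    have mS: "m \<in> S" "l \<noteq> m" using that by auto
    have opp: "opposite_lines P L I l m" using assms(4) lS mS by auto
    obtain l1 q l2 r where h: "l1 \<in> L \<and> I p l1 \<and> l1 \<noteq> l \<and> q \<in> P \<and> I q l1 \<and> q \<noteq> p \<and>
       l2 \<in> L \<and> I q l2 \<and> l2 \<noteq> l1 \<and> r \<in> P \<and> I r l2 \<and> I r m"
      using opp_path[OF assms(1) opp lL mL p] by blast
    have "l1 \<in> A" using h unfolding A_def by simp
    moreover have "q \<in> B l1" using h unfolding B_def by simp
    moreover have "l2 \<in> C l1 q" using h unfolding C_def by simp
    ultimately have "l2 \<in> T" unfolding T_def by blast
    then have ex: "\<exists>x. x \<in> T \<and> (\<exists>r \<in> P. I r x \<and> I r m)" using h by blast
    have "f m \<in> T \<and> (\<exists>r \<in> P. I r (f m) \<and> I r m)"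
      unfolding f_def by (rule someI_ex[OF ex])
    moreover have "T \<subseteq> L" unfolding T_def C_def by auto
    ultimately show ?thesis by blast
  qed
  have inj: "inj_on f (S - {l})"
  proof (rule inj_onI)
    fix m m' assume m1: "m \<in> S - {l}" and m2: "m' \<in> S - {l}" and feq: "f m = f m'"
    show "m = m'"
    proof (rule ccontr)
      assume ne: "m \<noteq> m'"
      have mS: "m \<in> S" "m' \<in> S" using m1 m2 by simp_all
      have opp: "opposite_lines P L I m m'" using assms(4) mS ne by auto
      have f1: "\<exists>r \<in> P. I r (f m) \<and> I r m" using fT[OF m1] by (rule conjunct1[OF conjunct2])
      have f2': "\<exists>r \<in> P. I r (f m') \<and> I r m'" using fT[OF m2] by (rule conjunct1[OF conjunct2])
      have f2: "\<exists>r \<in> P. I r (f m) \<and> I r m'" unfolding feq by (rule f2')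
      obtain r where r: "r \<in> P" "I r (f m)" "I r m" using f1 by blast
      obtain r' where r': "r' \<in> P" "I r' (f m)" "I r' m'" using f2 by blast
      have mL: "m \<in> L" "m' \<in> L" using mS assms(3) by auto
      have fL: "f m \<in> L" using fT[OF m1] by (rule conjunct2[OF conjunct2])
      show False using opp_short[OF opp mL r(1) r(3) fL r(2) r'(1) r'(2) r'(3)] .
    qed
  qed
  have sub: "f ` (S - {l}) \<subseteq> T"
  proof
    fix x assume "x \<in> f ` (S - {l})"
    then obtain m where "m \<in> S - {l}" "x = f m" by blast
    then show "x \<in> T" using fT by blast
  qed
  have finT: "finite T" using cT by (rule conjunct1)
  have "finite (f ` (S - {l}))" by (rule finite_subset[OF sub finT])
  then have fin: "finite (S - {l})" by (rule finite_imageD[OF _ inj])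
  have "card (S - {l}) \<le> card T" by (rule card_inj_on_le[OF inj sub finT])
  moreover have "t * (s * t) = s * t ^ 2" by (simp add: power2_eq_square algebra_simps)
  ultimately have cS: "card (S - {l}) \<le> s * t ^ 2" using cT by linarith
  have finS: "finite S" using fin by simp
  have "card S = Suc (card (S - {l}))" by (rule card.remove[OF finS lS])
  then have "card S \<le> s * t ^ 2 + 1" using cS by linarith
  then show ?thesis using finS by blast
qed

end
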